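(* Let $n,m,N$ be positive integers, $p_1,\ldots,p_N,q_1,\ldots,q_N,g_1,\ldots,g_m\in\mathbb{R}[\mathbf{x}]$, $\mathbf{x}=(x_1,\ldots,x_n)$, and $\mathbf{K}=\{\mathbf{x}\in\mathbb{R}^n\mid g_j(\mathbf{x})\ge0,\ j\in[m]\}$. Assume $\mathbf{K}$ is compact, $q_i>0$ on $\mathbf{K}$ for all $i\in[N]$, and the quadratic module $\mathcal{Q}(\mathbf{g})$ is Archimedean. Let $\rho=\inf_{\mathbf{x}\in\mathbf{K}}\sum_{i=1}^N p_i(\mathbf{x})/q_i(\mathbf{x})$ and, for integers $k\ge d_{\min}$, \[ \rho_k=\sup\Big\{c\ \Big|\ c\in\mathbb{R},\ h_i\in\mathbb{R}[\mathbf{x}]_{2k-\max\{\deg q_1,\deg q_i\}}\ (i=2,\ldots,N),\ p_1+\Big(\sum_{i=2}^N h_i-c\Big)q_1\in\mathcal{Q}_k(\mathbf{g}),\ p_i-h_iq_i\in\mathcal{Q}_k(\mathbf{g})\ (i=2,\ldots,N)\Big\}. \] Then $\rho_k\le\rho_{k+1}\le\rho$ for all $k\ge d_{\min}$ and $\rho_k\to\rho$ as $k\to\infty$.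
   Context: $\mathbb{R}[\mathbf{x}]_d$ denotes polynomials of degree at most $d$; $\Sigma[\mathbf{x}]$ denotes the set of sums of squares of polynomials. $\mathbf{g}=\{g_1,\ldots,g_m\}$. The quadratic module is $\mathcal{Q}(\mathbf{g})=\{\sigma_0+\sum_{j=1}^m\sigma_jg_j\mid \sigma_j\in\Sigma[\mathbf{x}]\}$, and the $k$-th truncated quadratic module is $\mathcal{Q}_k(\mathbf{g})=\{\sigma_0+\sum_{j=1}^m\sigma_jg_j\mid\sigma_j\in\Sigma[\mathbf{x}],\ \deg\sigma_0\le 2k,\ \deg(\sigma_jg_j)\le 2k\}$. $\mathcal{Q}(\mathbf{g})$ is Archimedean if there is $M>0$ with $M-x_1^2-\cdots-x_n^2\in\mathcal{Q}(\mathbf{g})$. With $d_j=\lceil \deg(g_j)/2\rceil$, $d_{\min}=\max\{\lceil\deg(p_i)/2\rceil,\lceil\deg(q_i)/2\rceil\ (i\in[N]);\ d_j\ (j\in[m])\}$. *)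

theory Defs
  imports "HOL-Analysis.Analysis" "HOL-Library.Poly_Mapping" "HOL-Library.Extended_Real"
begin

text \<open>Real multivariate polynomials in the variables indexed by the finite type 'n,
  represented as finitely supported maps from exponent vectors (monomials) to coefficients.
  Multiplication is the convolution product of Poly_Mapping.\<close>
type_synonym 'n mpoly = "('n \<Rightarrow>\<^sub>0 nat) \<Rightarrow>\<^sub>0 real"

definition mon_deg :: "('n \<Rightarrow>\<^sub>0 nat) \<Rightarrow> nat" where
  "mon_deg a = sum (Poly_Mapping.lookup a) (Poly_Mapping.keys a)"

text \<open>Total degree (the zero polynomial gets degree 0).\<close>
definition mdeg :: "'n mpoly \<Rightarrow> nat" where
  "mdeg p = Max (insert 0 (mon_deg ` Poly_Mapping.keys p))"

definition meval :: "'n::finite mpoly \<Rightarrow> real ^ 'n \<Rightarrow> real" where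
  "meval p x = (\<Sum>a\<in>Poly_Mapping.keys p. Poly_Mapping.lookup p a * (\<Prod>i\<in>Poly_Mapping.keys a. (x $ i) ^ Poly_Mapping.lookup a i))"

definition mconst :: "real \<Rightarrow> 'n mpoly" where
  "mconst c = Poly_Mapping.single 0 c"

definition mvar :: "'n \<Rightarrow> 'n mpoly" where
  "mvar i = Poly_Mapping.single (Poly_Mapping.single i 1) 1"

definition is_sos :: "'n mpoly \<Rightarrow> bool" where
  "is_sos s \<longleftrightarrow> (\<exists>fs. s = sum_list (map (\<lambda>f. f * f) fs))"

definition qmodule :: "nat \<Rightarrow> (nat \<Rightarrow> 'n::finite mpoly) \<Rightarrow> 'n mpoly set" where
  "qmodule m g = {f. \<exists>\<sigma>. (\<forall>j\<in>{0..m}. is_sos (\<sigma> j)) \<and>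
      f = \<sigma> 0 + (\<Sum>j=1..m. \<sigma> j * g j)}"

definition qmodule_k :: "nat \<Rightarrow> (nat \<Rightarrow> 'n::finite mpoly) \<Rightarrow> nat \<Rightarrow> 'n mpoly set" where
  "qmodule_k m g k = {f. \<exists>\<sigma>. (\<forall>j\<in>{0..m}. is_sos (\<sigma> j)) \<and>
      mdeg (\<sigma> 0) \<le> 2 * k \<and> (\<forall>j\<in>{1..m}. mdeg (\<sigma> j * g j) \<le> 2 * k) \<and>
      f = \<sigma> 0 + (\<Sum>j=1..m. \<sigma> j * g j)}"

definition archimedean :: "nat \<Rightarrow> (nat \<Rightarrow> 'n::finite mpoly) \<Rightarrow> bool" where
  "archimedean m g \<longleftrightarrow> (\<exists>M>0. mconst M - (\<Sum>i\<in>UNIV. mvar i * mvar i) \<in> qmodule m g)"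

definition semialg :: "nat \<Rightarrow> (nat \<Rightarrow> 'n::finite mpoly) \<Rightarrow> (real ^ 'n) set" where
  "semialg m g = {x. \<forall>j\<in>{1..m}. meval (g j) x \<ge> 0}"

definition half_up :: "nat \<Rightarrow> nat" where
  "half_up d = (d + 1) div 2"

definition d_min :: "nat \<Rightarrow> nat \<Rightarrow> (nat \<Rightarrow> 'n::finite mpoly) \<Rightarrow> (nat \<Rightarrow> 'n::finite mpoly) \<Rightarrow> (nat \<Rightarrow> 'n::finite mpoly) \<Rightarrow> nat" where
  "d_min N m p q g = Max ((\<lambda>i. half_up (mdeg (p i))) ` {1..N} \<union> (\<lambda>i. half_up (mdeg (q i))) ` {1..N}
                          \<union> (\<lambda>j. half_up (mdeg (g j))) ` {1..m})"

text \<open>rho = inf over K of sum p_i/q_i (extended real: inf of empty set is +infinity).\<close>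
definition rho :: "nat \<Rightarrow> nat \<Rightarrow> (nat \<Rightarrow> 'n::finite mpoly) \<Rightarrow> (nat \<Rightarrow> 'n::finite mpoly) \<Rightarrow> (nat \<Rightarrow> 'n::finite mpoly) \<Rightarrow> ereal" where
  "rho N m p q g = (INF x\<in>semialg m g. ereal (\<Sum>i=1..N. meval (p i) x / meval (q i) x))"

text \<open>rho_k (extended real: sup of empty set is -infinity).\<close>
definition rho_k :: "nat \<Rightarrow> nat \<Rightarrow> (nat \<Rightarrow> 'n::finite mpoly) \<Rightarrow> (nat \<Rightarrow> 'n::finite mpoly) \<Rightarrow> (nat \<Rightarrow> 'n::finite mpoly) \<Rightarrow> nat \<Rightarrow> ereal" where
  "rho_k N m p q g k = Sup {ereal c | c. \<exists>h :: nat \<Rightarrow> 'n mpoly.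
      (\<forall>i\<in>{2..N}. mdeg (h i) \<le> 2 * k - max (mdeg (q 1)) (mdeg (q i))) \<and>
      p 1 + ((\<Sum>i=2..N. h i) - mconst c) * q 1 \<in> qmodule_k m g k \<and>
      (\<forall>i\<in>{2..N}. p i - h i * q i \<in> qmodule_k m g k)}"

end

theory Submission
  imports Defs
begin


lemma poly_sum_monomials:
  fixes p :: "'a \<Rightarrow>\<^sub>0 'b::comm_monoid_add"
  shows "p = (\<Sum>a\<in>Poly_Mapping.keys p. Poly_Mapping.single a (Poly_Mapping.lookup p a))"
proof (rule poly_mapping_eqI)
  fix k
  show "Poly_Mapping.lookup p k = Poly_Mapping.lookup (\<Sum>a\<in>Poly_Mapping.keys p. Poly_Mapping.single a (Poly_Mapping.lookup p a)) k"
    by (cases "k \<in> Poly_Mapping.keys p") (auto simp: lookup_sum lookup_single when_def in_keys_iff)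
qed

lemma poly_sum_monomials_superset:
  fixes p :: "'a \<Rightarrow>\<^sub>0 'b::comm_monoid_add"
  assumes "finite S" "Poly_Mapping.keys p \<subseteq> S"
  shows "p = (\<Sum>a\<in>S. Poly_Mapping.single a (Poly_Mapping.lookup p a))"
proof -
  have "(\<Sum>a\<in>S. Poly_Mapping.single a (Poly_Mapping.lookup p a)) = (\<Sum>a\<in>Poly_Mapping.keys p. Poly_Mapping.single a (Poly_Mapping.lookup p a))"
    using assms by (intro sum.mono_neutral_right) (auto simp: in_keys_iff)
  then show ?thesis using poly_sum_monomials[of p] by simp
qed

definition mmono :: "('n::finite \<Rightarrow>\<^sub>0 nat) \<Rightarrow> real ^ 'n \<Rightarrow> real" where
  "mmono a x = (\<Prod>i\<in>UNIV. (x $ i) ^ Poly_Mapping.lookup a i)"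

lemma mmono_add: "mmono (a + b) x = mmono a x * mmono b x"
  by (simp add: mmono_def lookup_add power_add prod.distrib)

lemma mmono_zero: "mmono 0 x = 1"
  by (simp add: mmono_def)

lemma meval_alt: "meval p x = (\<Sum>a\<in>Poly_Mapping.keys p. Poly_Mapping.lookup p a * mmono a x)"
  unfolding meval_def mmono_def
proof (intro sum.cong refl arg_cong2[where f="(*)"])
  fix a :: "'a \<Rightarrow>\<^sub>0 nat"
  show "(\<Prod>i\<in>Poly_Mapping.keys a. x $ i ^ Poly_Mapping.lookup a i) = (\<Prod>i\<in>UNIV. x $ i ^ Poly_Mapping.lookup a i)"
    by (intro prod.mono_neutral_left) (auto simp: in_keys_iff)
qed

lemma meval_superset:
  assumes "finite S" "Poly_Mapping.keys p \<subseteq> S"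
  shows "meval p x = (\<Sum>a\<in>S. Poly_Mapping.lookup p a * mmono a x)"
  unfolding meval_alt using assms by (intro sum.mono_neutral_left) (auto simp: in_keys_iff)

lemma meval_add: "meval (p + q) x = meval p x + meval q x"
proof -
  let ?S = "Poly_Mapping.keys p \<union> Poly_Mapping.keys q"
  have k: "Poly_Mapping.keys (p + q) \<subseteq> ?S" by (rule keys_add)
  show ?thesis
    using meval_superset[of ?S "p+q" x] meval_superset[of ?S p x] meval_superset[of ?S q x] k
    by (simp add: lookup_add distrib_right sum.distrib)
qed

lemma meval_zero: "meval 0 x = 0"
  by (simp add: meval_def)

lemma meval_single: "meval (Poly_Mapping.single a c) x = c * mmono a x"
  by (cases "c = 0") (simp_all add: meval_alt meval_zero)

lemma meval_sum: "meval (\<Sum>i\<in>I. f i) x = (\<Sum>i\<in>I. meval (f i) x)"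
  by (induction I rule: infinite_finite_induct) (simp_all add: meval_zero meval_add)

lemma meval_mult: "meval (p * q) x = meval p x * meval q x"
proof -
  have pe: "p = (\<Sum>a\<in>Poly_Mapping.keys p. Poly_Mapping.single a (Poly_Mapping.lookup p a))"
    by (rule poly_sum_monomials)
  have qe: "q = (\<Sum>a\<in>Poly_Mapping.keys q. Poly_Mapping.single a (Poly_Mapping.lookup q a))"
    by (rule poly_sum_monomials)
  have "p * q = (\<Sum>a\<in>Poly_Mapping.keys p. \<Sum>b\<in>Poly_Mapping.keys q.
          Poly_Mapping.single a (Poly_Mapping.lookup p a) * Poly_Mapping.single b (Poly_Mapping.lookup q b))"
    by (subst pe, subst qe, rule sum_product)
  then have "meval (p * q) x = (\<Sum>a\<in>Poly_Mapping.keys p. \<Sum>b\<in>Poly_Mapping.keys q.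
          (Poly_Mapping.lookup p a * mmono a x) * (Poly_Mapping.lookup q b * mmono b x))"
    by (simp add: meval_sum mult_single meval_single mmono_add mult_ac)
  also have "\<dots> = meval p x * meval q x"
    by (simp add: meval_alt sum_product)
  finally show ?thesis .
qed

lemma meval_mconst: "meval (mconst c) x = c"
  by (simp add: mconst_def meval_single mmono_zero)

lemma meval_one: "meval 1 x = 1"
  using meval_mconst[of 1 x] by (simp add: mconst_def)

lemma meval_uminus: "meval (- p) x = - meval p x"
  using meval_add[of "-p" p x] by (simp add: meval_zero)

lemma meval_diff: "meval (p - q) x = meval p x - meval q x"
  using meval_add[of p "-q" x] by (simp add: meval_uminus)

lemma meval_mvar: "meval (mvar i) x = x $ i"
proof -
  have "mmono (Poly_Mapping.single i 1) x = (\<Prod>j\<in>UNIV. if j = i then x $ i else 1)"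
    unfolding mmono_def by (intro prod.cong refl) (auto simp: lookup_single when_def)
  also have "\<dots> = x $ i" by (simp add: prod.delta)
  finally show ?thesis by (simp add: mvar_def meval_single)
qed

lemma mconst_add: "mconst (a + b) = mconst a + mconst b"
  by (simp add: mconst_def single_add)
lemma mconst_mult: "mconst (a * b) = mconst a * mconst b"
  by (simp add: mconst_def mult_single)
lemma mconst_0: "mconst 0 = 0" by (simp add: mconst_def)
lemma mconst_1: "mconst 1 = 1" by (simp add: mconst_def)
lemma mconst_uminus: "mconst (- a) = - mconst a" by (simp add: mconst_def single_uminus)
lemma mconst_diff: "mconst (a - b) = mconst a - mconst b" by (simp add: mconst_def single_diff)

lemma mvar_power: "mvar i ^ k = Poly_Mapping.single (Poly_Mapping.single i k) (1::real)"
proof (induction k)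
  case 0 then show ?case by simp
next
  case (Suc k)
  have "Poly_Mapping.single i k + Poly_Mapping.single i 1 = Poly_Mapping.single i (Suc k)"
    by (simp flip: single_add)
  then show ?case using Suc by (simp add: mvar_def mult_single mult.commute)
qed

lemma prod_single_mon:
  "finite S \<Longrightarrow> (\<Prod>i\<in>S. Poly_Mapping.single (Poly_Mapping.single i (k i)) (1::real)) =
     Poly_Mapping.single (\<Sum>i\<in>S. Poly_Mapping.single i (k i)) 1"
  by (induction S rule: finite_induct) (simp_all add: mult_single)

lemma monomial_as_prod:
  "Poly_Mapping.single (a :: 'n::finite \<Rightarrow>\<^sub>0 nat) (1::real) = (\<Prod>i\<in>UNIV. mvar i ^ Poly_Mapping.lookup a i)"
proof -
  have "a = (\<Sum>i\<in>UNIV. Poly_Mapping.single i (Poly_Mapping.lookup a i))"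
    by (rule poly_sum_monomials_superset) auto
  then show ?thesis by (simp add: mvar_power prod_single_mon)
qed

lemma mpoly_induct [case_names const var add mult]:
  fixes P :: "'n::finite mpoly \<Rightarrow> bool"
  assumes const: "\<And>c. P (mconst c)" and var: "\<And>i. P (mvar i)"
    and add: "\<And>p q. P p \<Longrightarrow> P q \<Longrightarrow> P (p + q)"
    and mult: "\<And>p q. P p \<Longrightarrow> P q \<Longrightarrow> P (p * q)"
  shows "P p"
proof -
  have P0: "P 0" using const[of 0] by (simp add: mconst_0)
  have P1: "P 1" using const[of 1] by (simp add: mconst_1)
  have Psum: "\<And>f I. (\<And>i. P (f i)) \<Longrightarrow> P (\<Sum>i\<in>I. f i)"
  proof -
    fix f :: "_ \<Rightarrow> 'n mpoly" and I
    assume "\<And>i. P (f i)"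
    then show "P (\<Sum>i\<in>I. f i)"
      by (induction I rule: infinite_finite_induct) (simp_all add: P0 add)
  qed
  have Pprod: "\<And>f I. (\<And>i. P (f i)) \<Longrightarrow> P (\<Prod>i\<in>I. f i)"
  proof -
    fix f :: "_ \<Rightarrow> 'n mpoly" and I
    assume "\<And>i. P (f i)"
    then show "P (\<Prod>i\<in>I. f i)"
      by (induction I rule: infinite_finite_induct) (simp_all add: P1 mult)
  qed
  have Ppow: "\<And>q k. P q \<Longrightarrow> P (q ^ k)"
  proof -
    fix q :: "'n mpoly" and k :: nat
    assume "P q" then show "P (q ^ k)" by (induction k) (simp_all add: P1 mult)
  qed
  have Pmon: "\<And>a c. P (Poly_Mapping.single a c)"
  proof -
    fix a :: "'n \<Rightarrow>\<^sub>0 nat" and c :: real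
    have "Poly_Mapping.single a c = mconst c * Poly_Mapping.single a (1::real)"
      by (simp add: mconst_def mult_single)
    also have "\<dots> = mconst c * (\<Prod>i\<in>UNIV. mvar i ^ Poly_Mapping.lookup a i)"
      by (simp add: monomial_as_prod)
    moreover have "P (mconst c * (\<Prod>i\<in>UNIV. mvar i ^ Poly_Mapping.lookup a i))"
      by (rule mult[OF const Pprod[OF Ppow[OF var]]])
    ultimately show "P (Poly_Mapping.single a c)" by simp
  qed
  show ?thesis
    by (subst poly_sum_monomials) (rule Psum, rule Pmon)
qed

lemma ring_hom_meval:
  fixes \<phi> :: "'n::finite mpoly \<Rightarrow> real"
  assumes add: "\<And>p q. \<phi> (p + q) = \<phi> p + \<phi> q" and mult: "\<And>p q. \<phi> (p * q) = \<phi> p * \<phi> q"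
    and const: "\<And>c. \<phi> (mconst c) = c"
  shows "\<phi> p = meval p (\<chi> i. \<phi> (mvar i))"
proof -
  have h0: "\<phi> 0 = 0" using const[of 0] by (simp add: mconst_0)
  have h1: "\<phi> 1 = 1" using const[of 1] by (simp add: mconst_1)
  have hsum: "\<And>f I. \<phi> (\<Sum>i\<in>I. f i) = (\<Sum>i\<in>I. \<phi> (f i))"
  proof -
    fix f :: "_ \<Rightarrow> 'n mpoly" and I
    show "\<phi> (\<Sum>i\<in>I. f i) = (\<Sum>i\<in>I. \<phi> (f i))"
      by (induction I rule: infinite_finite_induct) (simp_all add: h0 add)
  qed
  have hprod: "\<And>f I. \<phi> (\<Prod>i\<in>I. f i) = (\<Prod>i\<in>I. \<phi> (f i))"
  proof -
    fix f :: "_ \<Rightarrow> 'n mpoly" and I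
    show "\<phi> (\<Prod>i\<in>I. f i) = (\<Prod>i\<in>I. \<phi> (f i))"
      by (induction I rule: infinite_finite_induct) (simp_all add: h1 mult)
  qed
  have hpow: "\<And>q k. \<phi> (q ^ k) = \<phi> q ^ k"
  proof -
    fix q :: "'n mpoly" and k :: nat
    show "\<phi> (q ^ k) = \<phi> q ^ k" by (induction k) (simp_all add: h1 mult)
  qed
  have hmon: "\<And>a c. \<phi> (Poly_Mapping.single a c) = c * mmono a (\<chi> i. \<phi> (mvar i))"
  proof -
    fix a :: "'n \<Rightarrow>\<^sub>0 nat" and c :: real
    have "Poly_Mapping.single a c = mconst c * Poly_Mapping.single a (1::real)"
      by (simp add: mconst_def mult_single)
    then have "Poly_Mapping.single a c = mconst c * (\<Prod>i\<in>UNIV. mvar i ^ Poly_Mapping.lookup a i)"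
      by (simp add: monomial_as_prod)
    then show "\<phi> (Poly_Mapping.single a c) = c * mmono a (\<chi> i. \<phi> (mvar i))"
      by (simp add: mult const hprod hpow mmono_def)
  qed
  show ?thesis
    by (subst poly_sum_monomials) (simp add: hsum hmon meval_alt)
qed



definition qm :: "'n::finite mpoly set \<Rightarrow> bool" where
  "qm M \<longleftrightarrow> (\<forall>a\<in>M. \<forall>b\<in>M. a + b \<in> M) \<and> (\<forall>s. s * s \<in> M) \<and> (\<forall>s. \<forall>a\<in>M. s * s * a \<in> M)"

lemma qm_add: "qm M \<Longrightarrow> a \<in> M \<Longrightarrow> b \<in> M \<Longrightarrow> a + b \<in> M"
  by (simp add: qm_def)
lemma qm_sq: "qm M \<Longrightarrow> s * s \<in> M"
  by (simp add: qm_def)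
lemma qm_sqmult: "qm M \<Longrightarrow> a \<in> M \<Longrightarrow> s * s * a \<in> M"
  by (simp add: qm_def)
lemma qm_zero: "qm M \<Longrightarrow> 0 \<in> M"
  using qm_sq[of M 0] by simp
lemma qm_one: "qm M \<Longrightarrow> 1 \<in> M"
  using qm_sq[of M 1] by simp

lemma is_sos_0: "is_sos 0"
  unfolding is_sos_def by (rule exI[of _ "[]"]) simp
lemma is_sos_sq: "is_sos (s * s)"
  unfolding is_sos_def by (rule exI[of _ "[s]"]) simp
lemma is_sos_add: assumes "is_sos a" "is_sos b" shows "is_sos (a + b)"
proof -
  obtain fs gs where "a = sum_list (map (\<lambda>f. f * f) fs)" "b = sum_list (map (\<lambda>f. f * f) gs)"
    using assms unfolding is_sos_def by blast
  then have "a + b = sum_list (map (\<lambda>f. f * f) (fs @ gs))" by simp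
  then show ?thesis unfolding is_sos_def by blast
qed
lemma sum_list_sq_mult: "s * s * sum_list (map (\<lambda>f. f * f) fs) = sum_list (map (\<lambda>f. f * f) (map ((*) s) fs))"
  for s :: "'a::comm_ring_1"
  by (induction fs) (simp_all add: distrib_left mult_ac)
lemma is_sos_sqmult: assumes "is_sos a" shows "is_sos (s * s * a)"
proof -
  obtain fs where "a = sum_list (map (\<lambda>f. f * f) fs)" using assms unfolding is_sos_def by blast
  then have "s * s * a = sum_list (map (\<lambda>f. f * f) (map ((*) s) fs))" using sum_list_sq_mult by metis
  then show ?thesis unfolding is_sos_def by blast
qed

lemma is_sos_sqmult': "is_sos a \<Longrightarrow> is_sos (s * (s * a))"
  using is_sos_sqmult[of a s] by (simp add: mult.assoc)

lemma qm_sosmult: assumes "qm M" "is_sos t" "a \<in> M" shows "t * a \<in> M"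
proof -
  obtain fs where t: "t = sum_list (map (\<lambda>f. f * f) fs)" using assms(2) is_sos_def by blast
  have "sum_list (map (\<lambda>f. f * f) fs) * a \<in> M"
  proof (induction fs)
    case Nil then show ?case using qm_zero[OF assms(1)] by simp
  next
    case (Cons f fs) then show ?case
      using qm_add[OF assms(1)] qm_sqmult[OF assms(1) assms(3)] by (simp add: distrib_right)
  qed
  then show ?thesis using t by simp
qed

lemma qm_sos: "qm M \<Longrightarrow> is_sos t \<Longrightarrow> t \<in> M"
  using qm_sosmult[of M t 1] qm_one[of M] by simp

lemma is_sos_const: "c \<ge> 0 \<Longrightarrow> is_sos (mconst c)"
proof -
  assume "c \<ge> 0"
  then have "mconst c = mconst (sqrt c) * mconst (sqrt c)"
    by (simp flip: mconst_mult)
  then show ?thesis using is_sos_sq by metis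
qed

lemma qm_const: "qm M \<Longrightarrow> c \<ge> 0 \<Longrightarrow> mconst c \<in> M"
  using qm_sos is_sos_const by blast

lemma qm_scale: "qm M \<Longrightarrow> c \<ge> 0 \<Longrightarrow> a \<in> M \<Longrightarrow> mconst c * a \<in> M"
  using qm_sosmult is_sos_const by blast

lemma qm_sum: "qm M \<Longrightarrow> (\<And>i. i \<in> I \<Longrightarrow> f i \<in> M) \<Longrightarrow> (\<Sum>i\<in>I. f i) \<in> M"
  by (induction I rule: infinite_finite_induct) (simp_all add: qm_zero qm_add)

lemma qm_addconst: "qm M \<Longrightarrow> a \<in> M \<Longrightarrow> c \<ge> 0 \<Longrightarrow> a + mconst c \<in> M"
  using qm_add qm_const by blast

lemma qm_qmodule: "qm (qmodule m g)"
  unfolding qm_def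
proof (intro conjI ballI allI)
  fix a b assume "a \<in> qmodule m g" "b \<in> qmodule m g"
  then obtain \<sigma> \<tau> where s: "\<forall>j\<in>{0..m}. is_sos (\<sigma> j)" "a = \<sigma> 0 + (\<Sum>j=1..m. \<sigma> j * g j)"
    and t: "\<forall>j\<in>{0..m}. is_sos (\<tau> j)" "b = \<tau> 0 + (\<Sum>j=1..m. \<tau> j * g j)"
    unfolding qmodule_def by blast
  show "a + b \<in> qmodule m g"
    unfolding qmodule_def
  proof (rule CollectI, rule exI[of _ "\<lambda>j. \<sigma> j + \<tau> j"], intro conjI)
    show "\<forall>j\<in>{0..m}. is_sos (\<sigma> j + \<tau> j)" using s t is_sos_add by blast
    have "(\<Sum>j=1..m. (\<sigma> j + \<tau> j) * g j) = (\<Sum>j=1..m. \<sigma> j * g j) + (\<Sum>j=1..m. \<tau> j * g j)"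
      by (simp add: distrib_right sum.distrib)
    then show "a + b = \<sigma> 0 + \<tau> 0 + (\<Sum>j=1..m. (\<sigma> j + \<tau> j) * g j)"
      by (simp add: s(2) t(2) ac_simps)
  qed
next
  fix s :: "'a mpoly"
  show "s * s \<in> qmodule m g"
    unfolding qmodule_def
    by (rule CollectI, rule exI[of _ "\<lambda>j. if j = 0 then s * s else 0"]) (simp add: is_sos_sq is_sos_0)
next
  fix s a assume "a \<in> qmodule m g"
  then obtain \<sigma> where s: "\<forall>j\<in>{0..m}. is_sos (\<sigma> j)" "a = \<sigma> 0 + (\<Sum>j=1..m. \<sigma> j * g j)"
    unfolding qmodule_def by blast
  show "s * s * a \<in> qmodule m g"
    unfolding qmodule_def
    by (rule CollectI, rule exI[of _ "\<lambda>j. s * s * \<sigma> j"])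
       (simp add: s is_sos_sqmult' distrib_left sum_distrib_left mult.assoc)
qed

lemma g_in_qmodule: assumes "j \<in> {1..m}" shows "g j \<in> qmodule m g"
proof -
  have s1: "is_sos 1" using is_sos_sq[of 1] by simp
  have "(\<Sum>i=1..m. (if i = j then 1 else 0) * g i) = (\<Sum>i=1..m. if i = j then g i else 0)"
    by (intro sum.cong) auto
  also have "\<dots> = g j" using assms by (simp add: sum.delta)
  finally have e: "(\<Sum>i=1..m. (if i = j then 1 else 0) * g i) = g j" .
  have j0: "j \<noteq> 0" using assms by auto
  show ?thesis
    unfolding qmodule_def
    apply (rule CollectI, rule exI[of _ "\<lambda>i. if i = j then 1 else 0"])
    using e j0 s1 is_sos_0 by auto
qed

lemma qmodule_eventually:
  assumes "f \<in> qmodule m g"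
  shows "eventually (\<lambda>k. f \<in> qmodule_k m g k) sequentially"
proof -
  obtain \<sigma> where s: "\<forall>j\<in>{0..m}. is_sos (\<sigma> j)" "f = \<sigma> 0 + (\<Sum>j=1..m. \<sigma> j * g j)"
    using assms unfolding qmodule_def by blast
  define D where "D = mdeg (\<sigma> 0) + (\<Sum>j=1..m. mdeg (\<sigma> j * g j))"
  have "f \<in> qmodule_k m g k" if "k \<ge> D" for k
  proof -
    have Db: "mdeg (\<sigma> j * g j) \<le> D" if "j \<in> {1..m}" for j
      unfolding D_def using that by (intro trans_le_add2 member_le_sum) auto
    have h1: "\<forall>j\<in>{1..m}. mdeg (\<sigma> j * g j) \<le> 2 * k"
    proof
      fix j assume "j \<in> {1..m}"
      from Db[OF this] \<open>k \<ge> D\<close> show "mdeg (\<sigma> j * g j) \<le> 2 * k" by linarith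
    qed
    have h0: "mdeg (\<sigma> 0) \<le> 2 * k" using \<open>k \<ge> D\<close> unfolding D_def by linarith
    show ?thesis unfolding qmodule_k_def
      apply (intro CollectI exI[of _ \<sigma>] conjI)
      using s h0 h1 by auto
  qed
  then show ?thesis by (auto simp: eventually_sequentially)
qed

lemma qmodule_k_mono: assumes "k \<le> k'" shows "qmodule_k m g k \<subseteq> qmodule_k m g k'"
proof
  fix f assume "f \<in> qmodule_k m g k"
  then obtain \<sigma> where s: "\<forall>j\<in>{0..m}. is_sos (\<sigma> j)" "mdeg (\<sigma> 0) \<le> 2 * k"
     "\<forall>j\<in>{1..m}. mdeg (\<sigma> j * g j) \<le> 2 * k" "f = \<sigma> 0 + (\<Sum>j=1..m. \<sigma> j * g j)"
    unfolding qmodule_k_def by blast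
  show "f \<in> qmodule_k m g k'" unfolding qmodule_k_def
  proof (intro CollectI exI[of _ \<sigma>] conjI)
    show "mdeg (\<sigma> 0) \<le> 2 * k'" using s(2) assms by linarith
    show "\<forall>j\<in>{1..m}. mdeg (\<sigma> j * g j) \<le> 2 * k'"
    proof
      fix j assume "j \<in> {1..m}"
      with s(3) have "mdeg (\<sigma> j * g j) \<le> 2 * k" by blast
      with assms show "mdeg (\<sigma> j * g j) \<le> 2 * k'" by linarith
    qed
  qed (use s in auto)
qed

lemma meval_sos_nonneg: "is_sos s \<Longrightarrow> meval s x \<ge> 0"
proof -
  assume "is_sos s"
  then obtain fs where "s = sum_list (map (\<lambda>f. f * f) fs)" using is_sos_def by blast
  moreover have "meval (sum_list (map (\<lambda>f. f * f) fs)) x \<ge> 0"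
    by (induction fs) (simp_all add: meval_zero meval_add meval_mult)
  ultimately show ?thesis by simp
qed

lemma meval_qmodule_k_nonneg:
  assumes "f \<in> qmodule_k m g k" "x \<in> semialg m g"
  shows "meval f x \<ge> 0"
proof -
  obtain \<sigma> where s: "\<forall>j\<in>{0..m}. is_sos (\<sigma> j)" "f = \<sigma> 0 + (\<Sum>j=1..m. \<sigma> j * g j)"
    using assms unfolding qmodule_k_def by blast
  have "meval f x = meval (\<sigma> 0) x + (\<Sum>j=1..m. meval (\<sigma> j) x * meval (g j) x)"
    by (simp add: s meval_add meval_sum meval_mult)
  also have "\<dots> \<ge> 0"
    using s(1) assms(2) unfolding semialg_def
    by (intro add_nonneg_nonneg sum_nonneg mult_nonneg_nonneg) (auto intro: meval_sos_nonneg)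
  finally show ?thesis .
qed



lemma half_id: "mconst (1/2) + mconst (1/2) = (1 :: 'n::finite mpoly)"
  by (simp flip: mconst_add add: mconst_1)

lemma bnd_all:
  fixes Q :: "'n::finite mpoly set"
  assumes Q: "qm Q" and arch: "mconst N0 - (\<Sum>i\<in>UNIV. mvar i * mvar i) \<in> Q" and N0: "N0 > 0"
  shows "\<exists>N\<ge>0. mconst N - p * p \<in> Q"
proof (induction p rule: mpoly_induct)
  case (const c)
  have "mconst (c * c) - mconst c * mconst c = (0 :: 'n mpoly)" by (simp add: mconst_mult)
  then show ?case using qm_zero[OF Q] by (intro exI[of _ "c*c"]) auto
next
  case (var i)
  have e: "(\<Sum>j\<in>UNIV. mvar j * mvar j) = mvar i * mvar i + (\<Sum>j\<in>UNIV - {i}. mvar j * (mvar j :: 'n mpoly))"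
    by (simp add: sum.remove)
  have "mconst N0 - mvar i * mvar i = (mconst N0 - (\<Sum>j\<in>UNIV. mvar j * mvar j)) + (\<Sum>j\<in>UNIV - {i}. mvar j * (mvar j :: 'n mpoly))"
    by (simp add: e)
  also have "\<dots> \<in> Q" by (intro qm_add[OF Q] arch qm_sum[OF Q] qm_sq[OF Q])
  finally show ?case using N0 by (intro exI[of _ N0]) auto
next
  case (add p q)
  then obtain N1 N2 where n: "N1 \<ge> 0" "N2 \<ge> 0" "mconst N1 - p * p \<in> Q" "mconst N2 - q * q \<in> Q" by blast
  have c: "mconst (N1 + N1 + N2 + N2) = mconst N1 + mconst N1 + mconst N2 + (mconst N2 :: 'n mpoly)"
    by (simp only: mconst_add)
  have "mconst (N1 + N1 + N2 + N2) - (p + q) * (p + q) =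
      (mconst N1 - p * p) + (mconst N1 - p * p) + (mconst N2 - q * q) + (mconst N2 - q * q) + (p - q) * (p - q)"
    unfolding c by (simp add: algebra_simps)
  also have "\<dots> \<in> Q" using n by (intro qm_add[OF Q] qm_sq[OF Q]) auto
  finally show ?case using n by (intro exI[of _ "N1 + N1 + N2 + N2"]) auto
next
  case (mult p q)
  then obtain N1 N2 where n: "N1 \<ge> 0" "N2 \<ge> 0" "mconst N1 - p * p \<in> Q" "mconst N2 - q * q \<in> Q" by blast
  have "mconst (N1 * N2) - (p * q) * (p * q) = mconst N2 * (mconst N1 - p * p) + p * p * (mconst N2 - q * q)"
    unfolding mconst_mult by (simp add: algebra_simps)
  also have "\<dots> \<in> Q" using n by (intro qm_add[OF Q] qm_scale[OF Q] qm_sqmult[OF Q]) auto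
  finally show ?case using n by (intro exI[of _ "N1 * N2"]) auto
qed

lemma bound_from_sq:
  fixes Q :: "'n::finite mpoly set"
  assumes Q: "qm Q" and n: "mconst N - a * a \<in> Q"
  shows "mconst ((N + 1) / 2) - a \<in> Q"
proof -
  let ?h = "mconst (1/2) :: 'n mpoly"
  have h: "?h + ?h = 1" by (rule half_id)
  have "mconst ((N + 1) / 2) = (mconst (1/2 * (N + 1)) :: 'n mpoly)" by simp
  also have "\<dots> = ?h * (mconst N + 1)" by (simp only: mconst_mult mconst_add mconst_1)
  finally have c: "mconst ((N + 1) / 2) = ?h * (mconst N + 1)" .
  have "mconst ((N + 1) / 2) - a = ?h * ((1 - a) * (1 - a) + (mconst N - a * a))"
  proof -
    have "?h * (mconst N + 1) - a = ?h * ((1 - a) * (1 - a) + (mconst N - a * a)) - a * (1 - (?h + ?h))"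
      by (simp add: algebra_simps)
    then show ?thesis unfolding c using h by simp
  qed
  also have "\<dots> \<in> Q" using n by (intro qm_scale[OF Q] qm_add[OF Q] qm_sq[OF Q]) auto
  finally show ?thesis .
qed

lemma arch_bound:
  fixes Q :: "'n::finite mpoly set"
  assumes Q: "qm Q" and arch: "mconst N0 - (\<Sum>i\<in>UNIV. mvar i * mvar i) \<in> Q" and N0: "N0 > 0"
  shows "\<exists>B. mconst B - a \<in> Q"
  using bnd_all[OF Q arch N0, of a] bound_from_sq[OF Q] by blast

lemma arch_bound_ge:
  fixes Q :: "'n::finite mpoly set"
  assumes Q: "qm Q" and b: "\<forall>a. \<exists>B. mconst B - a \<in> Q"
  shows "\<exists>B\<ge>c. mconst B - a \<in> Q"
proof -
  obtain B where B: "mconst B - a \<in> Q" using b by blast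
  have "mconst (max B c) - a = (mconst B - a) + mconst (max B c - B)"
    by (simp add: mconst_diff)
  also have "\<dots> \<in> Q" using B by (intro qm_addconst[OF Q]) auto
  finally show ?thesis by (intro exI[of _ "max B c"]) auto
qed

lemma step_identity:
  fixes f t h K Rr KR Bp Ec L :: "'a::comm_ring_1"
  assumes "h + h = 1" "K * Rr = KR" "h * h * K * K * Bp = Ec"
  shows "K * (f * t - 1) + KR * t + (1 - h * K * t) * (1 - h * K * t) * (f + Rr)
       + (h * K * t) * (h * K * t) * (Bp - f - Rr) + Ec * (L - t * t) = f + (Rr - K + Ec * L)"
proof -
  have "K * (f * t - 1) + (K * Rr) * t + (1 - h * K * t) * (1 - h * K * t) * (f + Rr)
       + (h * K * t) * (h * K * t) * (Bp - f - Rr) + (h * h * K * K * Bp) * (L - t * t)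
     = f + (Rr - K + (h * h * K * K * Bp) * L) + K * t * (f + Rr) * (1 - (h + h))"
    by (simp add: algebra_simps)
  then show ?thesis using assms by simp
qed

lemma upgrade:
  fixes Q :: "'n::finite mpoly set"
  assumes Q: "qm Q" and b: "\<forall>a. \<exists>B. mconst B - a \<in> Q"
    and t: "is_sos t" and ft: "f * t - 1 \<in> Q"
  shows "f \<in> Q"
proof -
  obtain lam where lam: "lam \<ge> 1" "mconst lam - t \<in> Q" using arch_bound_ge[OF Q b] by blast
  obtain B where B: "B \<ge> 0" "mconst B - f \<in> Q" using arch_bound_ge[OF Q b] by blast
  obtain R where R: "R \<ge> 0" "mconst R - (- f) \<in> Q" using arch_bound_ge[OF Q b] by blast
  have fR: "f + mconst R \<in> Q" using R by (simp add: add.commute)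
  define Bp where "Bp = B + R + 1"
  define K where "K = 2 / (lam * lam * Bp)"
  define E where "E = Bp * K * K / 4"
  define \<delta> where "\<delta> = K / 2"
  have Bp: "Bp > 0" using B R by (simp add: Bp_def)
  have lam0: "lam > 0" using lam by simp
  have K0: "K > 0" using Bp lam0 by (simp add: K_def)
  have d0: "\<delta> > 0" using K0 by (simp add: \<delta>_def)
  have E0: "E \<ge> 0" using Bp K0 by (simp add: E_def)
  have EL: "E * (lam * lam) = K / 2"
  proof -
    have "Bp * K * lam * lam = 2" using Bp lam0 by (simp add: K_def field_simps)
    then show ?thesis unfolding E_def by (simp add: field_simps)
  qed
  let ?h = "mconst (1/2) :: 'n mpoly"
  have tQ: "t \<in> Q" using qm_sos[OF Q t] .
  have step: "f + mconst (r - \<delta>) \<in> Q" if r: "0 \<le> r" "r \<le> R" "f + mconst r \<in> Q" for r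
  proof -
    have X1: "mconst K * (f * t - 1) \<in> Q" using qm_scale[OF Q _ ft] K0 by simp
    have X2: "mconst (K * r) * t \<in> Q" using qm_scale[OF Q _ tQ] K0 r by simp
    have X3: "(1 - ?h * mconst K * t) * (1 - ?h * mconst K * t) * (f + mconst r) \<in> Q"
      using qm_sqmult[OF Q r(3)] .
    have "mconst Bp - f - mconst r = (mconst B - f) + mconst (Bp - r - B)"
      by (simp add: mconst_diff)
    also have "\<dots> \<in> Q" using B r by (intro qm_addconst[OF Q]) (auto simp: Bp_def)
    finally have X4: "(?h * mconst K * t) * (?h * mconst K * t) * (mconst Bp - f - mconst r) \<in> Q"
      using qm_sqmult[OF Q] by blast
    have "mconst (lam * lam) - t * t = (mconst lam + t) * (mconst lam - t)"
      by (simp add: mconst_mult algebra_simps)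
    also have "\<dots> \<in> Q" using lam lam0
      by (intro qm_sosmult[OF Q] is_sos_add is_sos_const t) auto
    finally have X5: "mconst E * (mconst (lam * lam) - t * t) \<in> Q" using qm_scale[OF Q E0] by blast
    have hh: "?h * ?h * mconst K * mconst K * mconst Bp = mconst E"
      by (simp add: E_def flip: mconst_mult) (simp add: field_simps)
    have id: "mconst K * (f * t - 1) + mconst (K * r) * t + (1 - ?h * mconst K * t) * (1 - ?h * mconst K * t) * (f + mconst r)
       + (?h * mconst K * t) * (?h * mconst K * t) * (mconst Bp - f - mconst r) + mconst E * (mconst (lam * lam) - t * t)
       = f + (mconst r - mconst K + mconst E * mconst (lam * lam))"
      by (rule step_identity[OF half_id _ hh]) (simp add: mconst_mult)
    have c: "mconst r - mconst K + mconst E * mconst (lam * lam) = mconst (r - \<delta>)"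
      by (simp add: EL \<delta>_def flip: mconst_mult mconst_diff mconst_add)
    have "f + mconst (r - \<delta>) = mconst K * (f * t - 1) + mconst (K * r) * t + (1 - ?h * mconst K * t) * (1 - ?h * mconst K * t) * (f + mconst r)
       + (?h * mconst K * t) * (?h * mconst K * t) * (mconst Bp - f - mconst r) + mconst E * (mconst (lam * lam) - t * t)"
      using id unfolding c by simp
    also have "\<dots> \<in> Q" using X1 X2 X3 X4 X5 by (intro qm_add[OF Q])
    finally show ?thesis .
  qed
  have iter: "\<forall>r. 0 \<le> r \<and> r \<le> R \<and> r < real n * \<delta> \<and> f + mconst r \<in> Q \<longrightarrow> f \<in> Q" for n :: nat
  proof (induction n)
    case 0 then show ?case using d0 by auto
  next
    case (Suc n)
    show ?case
    proof (intro allI impI)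
      fix r assume r: "0 \<le> r \<and> r \<le> R \<and> r < real (Suc n) * \<delta> \<and> f + mconst r \<in> Q"
      then have s: "f + mconst (r - \<delta>) \<in> Q" using step by blast
      show "f \<in> Q"
      proof (cases "r - \<delta> < 0")
        case True
        have "f = (f + mconst (r - \<delta>)) + mconst (\<delta> - r)" by (simp add: mconst_diff)
        also have "\<dots> \<in> Q" by (rule qm_addconst[OF Q s]) (use True in simp)
        finally show ?thesis .
      next
        case False
        then show ?thesis using Suc.IH r s d0 by (auto simp: algebra_simps)
      qed
    qed
  qed
  define n where "n = nat (ceiling (R / \<delta>)) + 1"
  have "R / \<delta> < real n" unfolding n_def by linarith
  then have "R < real n * \<delta>" using d0 by (simp add: field_simps)
  then show ?thesis using iter[of n] fR R by blast
qed



definition alph :: "'n::finite mpoly set \<Rightarrow> 'n mpoly \<Rightarrow> real" where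
  "alph M a = Sup {r. a - mconst r \<in> M}"

lemma mconst_m1: "mconst (-1) = (-1 :: 'n::finite mpoly)"
  by (simp add: mconst_uminus mconst_1)

context
  fixes M :: "'n::finite mpoly set"
  assumes qmM: "qm M" and archM: "\<forall>a. \<exists>B. mconst B - a \<in> M" and propM: "mconst (-1) \<notin> M"
    and extM: "\<forall>b. b \<notin> M \<longrightarrow> (\<exists>m t. m \<in> M \<and> is_sos t \<and> mconst (-1) = m + b * t)"
begin

lemma cn: assumes "mconst c \<in> M" shows "c \<ge> 0"
proof (rule ccontr)
  assume "\<not> c \<ge> 0"
  then have c: "c < 0" by simp
  have "mconst (-1/c) * mconst c = mconst (-1)" using c by (simp flip: mconst_mult)
  moreover have "mconst (-1/c) * mconst c \<in> M" using qm_scale[OF qmM _ assms] c by simp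
  ultimately show False using propM by metis
qed

lemma closedM: assumes "\<forall>\<delta>>0. b + mconst \<delta> \<in> M" shows "b \<in> M"
proof (rule ccontr)
  assume "b \<notin> M"
  then obtain m t where mt: "m \<in> M" "is_sos t" "mconst (-1) = m + b * t" using extM by blast
  obtain B where B: "B \<ge> 1" "mconst B - t \<in> M" using arch_bound_ge[OF qmM archM] by blast
  define \<delta> where "\<delta> = 1 / (2 * B)"
  have d0: "\<delta> > 0" using B by (simp add: \<delta>_def)
  have X: "(b + mconst \<delta>) * t \<in> M"
    using qm_sosmult[OF qmM mt(2) assms[rule_format, OF d0]] by (simp add: mult.commute)
  have Y: "mconst \<delta> * (mconst B - t) \<in> M" using qm_scale[OF qmM _ B(2)] d0 by simp
  have "m + (b + mconst \<delta>) * t + mconst \<delta> * (mconst B - t) = (m + b * t) + mconst \<delta> * mconst B"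
    by (simp add: algebra_simps)
  also have "\<dots> = mconst (-1) + mconst (\<delta> * B)" by (simp only: mt(3)[symmetric] mconst_mult)
  also have "\<dots> = mconst (-1 + \<delta> * B)" by (simp only: mconst_add)
  also have "-1 + \<delta> * B = -1/2" using B by (simp add: \<delta>_def)
  finally have e: "m + (b + mconst \<delta>) * t + mconst \<delta> * (mconst B - t) = mconst (-1/2)" .
  have "mconst (-1/2) \<in> M" unfolding e[symmetric] by (rule qm_add[OF qmM qm_add[OF qmM mt(1) X] Y])
  then have "-1/2 \<ge> (0::real)" by (rule cn)
  then show False by simp
qed

lemma supp_mult: assumes "b \<in> M" "- b \<in> M" shows "c * b \<in> M"
proof -
  let ?h = "mconst (1/2) :: 'n mpoly"
  have "(?h * (c + 1)) * (?h * (c + 1)) * b + (?h * (c - 1)) * (?h * (c - 1)) * (- b) = (?h + ?h) * (?h + ?h) * c * b"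
    by (simp add: algebra_simps)
  then have e: "c * b = (?h * (c + 1)) * (?h * (c + 1)) * b + (?h * (c - 1)) * (?h * (c - 1)) * (- b)"
    by (simp add: half_id)
  show ?thesis unfolding e using assms by (intro qm_add[OF qmM] qm_sqmult[OF qmM])
qed

lemma totalM: "c \<in> M \<or> - c \<in> M"
proof (rule ccontr)
  assume "\<not> (c \<in> M \<or> - c \<in> M)"
  then have n: "c \<notin> M" "- c \<notin> M" by auto
  obtain m1 t1 where 1: "m1 \<in> M" "is_sos t1" "mconst (-1) = m1 + c * t1" using extM n(1) by blast
  obtain m2 t2 where 2: "m2 \<in> M" "is_sos t2" "mconst (-1) = m2 + (- c) * t2" using extM n(2) by blast
  have m1: "m1 = -1 - c * t1" using 1(3) by (simp add: mconst_m1 algebra_simps)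
  have m2: "m2 = -1 + c * t2" using 2(3) by (simp add: mconst_m1 algebra_simps)
  have "t2 * m1 + t1 * m2 + t2 = - t1" unfolding m1 m2 by (simp add: algebra_simps)
  moreover have "t2 * m1 + t1 * m2 + t2 \<in> M"
    by (rule qm_add[OF qmM qm_add[OF qmM qm_sosmult[OF qmM 2(2) 1(1)] qm_sosmult[OF qmM 1(2) 2(1)]] qm_sos[OF qmM 2(2)]])
  ultimately have "- t1 \<in> M" by simp
  then have "c * t1 \<in> M" using supp_mult qm_sos[OF qmM 1(2)] by blast
  then have "m1 + c * t1 \<in> M" using 1 qm_add[OF qmM] by simp
  then show False using propM 1(3) by metis
qed

lemma S_ne: "\<exists>r. a - mconst r \<in> M"
proof -
  obtain B where "mconst B - (- a) \<in> M" using archM by blast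
  then have "a - mconst (- B) \<in> M" by (simp add: mconst_uminus add.commute)
  then show ?thesis by blast
qed

lemma S_bdd: "bdd_above {r. a - mconst r \<in> M}"
proof -
  obtain B where B: "mconst B - a \<in> M" using archM by blast
  show ?thesis
  proof (rule bdd_aboveI)
    fix r assume "r \<in> {r. a - mconst r \<in> M}"
    then have ar: "a - mconst r \<in> M" by simp
    have X: "(mconst B - a) + (a - mconst r) \<in> M" by (rule qm_add[OF qmM B ar])
    have e: "(mconst B - a) + (a - mconst r) = mconst (B - r)" by (simp add: mconst_diff)
    have "mconst (B - r) \<in> M" using X unfolding e .
    then have "B - r \<ge> 0" by (rule cn)
    then show "r \<le> B" by simp
  qed
qed

lemma alph_upper: "a - mconst r \<in> M \<Longrightarrow> r \<le> alph M a"
  unfolding alph_def by (rule cSup_upper) (auto simp: S_bdd)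

lemma lower_mono: assumes "a - mconst r \<in> M" "r' \<le> r" shows "a - mconst r' \<in> M"
proof -
  have e: "a - mconst r' = (a - mconst r) + mconst (r - r')" by (simp add: mconst_diff)
  have "(a - mconst r) + mconst (r - r') \<in> M" by (rule qm_addconst[OF qmM assms(1)]) (use assms(2) in simp)
  then show ?thesis unfolding e .
qed

lemma alph_approx: assumes "\<delta> > 0" shows "a - mconst (alph M a - \<delta>) \<in> M"
proof -
  have ne: "{r. a - mconst r \<in> M} \<noteq> {}" using S_ne by blast
  have "alph M a - \<delta> < Sup {r. a - mconst r \<in> M}" using assms by (simp add: alph_def)
  then obtain r where "r \<in> {r. a - mconst r \<in> M}" "alph M a - \<delta> < r"
    using less_cSupD[OF ne] by blast
  then show ?thesis using lower_mono by auto
qed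

lemma b_in: "a - mconst (alph M a) \<in> M"
proof (rule closedM, intro allI impI)
  fix \<delta> :: real assume "\<delta> > 0"
  have e: "a - mconst (alph M a) + mconst \<delta> = a - mconst (alph M a - \<delta>)" by (simp add: mconst_diff)
  show "a - mconst (alph M a) + mconst \<delta> \<in> M" unfolding e by (rule alph_approx[OF \<open>\<delta> > 0\<close>])
qed

lemma b_neg: "- (a - mconst (alph M a)) \<in> M"
proof (rule closedM, intro allI impI)
  fix \<delta> :: real assume d: "\<delta> > 0"
  have "a - mconst (alph M a + \<delta>) \<notin> M"
  proof
    assume "a - mconst (alph M a + \<delta>) \<in> M"
    then have "alph M a + \<delta> \<le> alph M a" by (rule alph_upper)
    then show False using d by simp
  qed
  then have "- (a - mconst (alph M a + \<delta>)) \<in> M" using totalM by blast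
  moreover have e: "- (a - mconst (alph M a)) + mconst \<delta> = - (a - mconst (alph M a + \<delta>))" by (simp add: mconst_add)
  ultimately show "- (a - mconst (alph M a)) + mconst \<delta> \<in> M" unfolding e by simp
qed

lemma alph_eq: assumes "a - mconst r \<in> M" "- (a - mconst r) \<in> M" shows "alph M a = r"
proof -
  have X: "(a - mconst r) + - (a - mconst (alph M a)) \<in> M" using assms b_neg qm_add[OF qmM] by blast
  have e: "(a - mconst r) + - (a - mconst (alph M a)) = mconst (alph M a - r)" by (simp add: mconst_diff)
  have "mconst (alph M a - r) \<in> M" using X unfolding e .
  then have "alph M a - r \<ge> 0" by (rule cn)
  then have 1: "alph M a \<ge> r" by simp
  have X2: "(a - mconst (alph M a)) + - (a - mconst r) \<in> M" using assms b_in qm_add[OF qmM] by blast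
  have e2: "(a - mconst (alph M a)) + - (a - mconst r) = mconst (r - alph M a)" by (simp add: mconst_diff)
  have "mconst (r - alph M a) \<in> M" using X2 unfolding e2 .
  then have "r - alph M a \<ge> 0" by (rule cn)
  then have 2: "alph M a \<le> r" by simp
  show ?thesis using 1 2 by simp
qed

lemma alph_add: "alph M (a + b) = alph M a + alph M b"
proof (rule alph_eq)
  have e: "a + b - mconst (alph M a + alph M b) = (a - mconst (alph M a)) + (b - mconst (alph M b))"
    by (simp add: mconst_add)
  show "a + b - mconst (alph M a + alph M b) \<in> M" unfolding e using b_in qm_add[OF qmM] by blast
  have e2: "- (a + b - mconst (alph M a + alph M b)) = - (a - mconst (alph M a)) + - (b - mconst (alph M b))"
    by (simp add: mconst_add)
  show "- (a + b - mconst (alph M a + alph M b)) \<in> M" unfolding e2 using b_neg qm_add[OF qmM] by blast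
qed

lemma alph_mult: "alph M (a * b) = alph M a * alph M b"
proof (rule alph_eq)
  let ?x = "a - mconst (alph M a)" and ?y = "b - mconst (alph M b)"
  have e: "a * b - mconst (alph M a * alph M b) = b * ?x + mconst (alph M a) * ?y"
    by (simp add: mconst_mult algebra_simps)
  have e2: "- (a * b - mconst (alph M a * alph M b)) = b * (- ?x) + mconst (alph M a) * (- ?y)"
    by (simp add: mconst_mult algebra_simps)
  have sx: "?x \<in> M" "- ?x \<in> M" "?y \<in> M" "- ?y \<in> M" using b_in b_neg by auto
  have sx2: "- (- ?x) \<in> M" "- (- ?y) \<in> M" using sx by auto
  show "a * b - mconst (alph M a * alph M b) \<in> M" unfolding e
    using sx by (intro qm_add[OF qmM] supp_mult)
  show "- (a * b - mconst (alph M a * alph M b)) \<in> M" unfolding e2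
    using sx sx2 by (intro qm_add[OF qmM] supp_mult)
qed

lemma alph_const: "alph M (mconst c) = c"
  by (rule alph_eq) (simp_all add: qm_zero[OF qmM])

lemma alph_nonneg: "m \<in> M \<Longrightarrow> alph M m \<ge> 0"
  using alph_upper[of m 0] by (simp add: mconst_0)

end

lemma qm_chain_union:
  assumes "C \<noteq> {}" "\<forall>M\<in>C. qm M" "\<forall>X\<in>C. \<forall>Y\<in>C. X \<subseteq> Y \<or> Y \<subseteq> X"
  shows "qm (\<Union>C)"
  unfolding qm_def
proof (intro conjI ballI allI)
  fix a b assume "a \<in> \<Union>C" "b \<in> \<Union>C"
  then obtain X Y where "X \<in> C" "Y \<in> C" "a \<in> X" "b \<in> Y" by blast
  then have "a \<in> X \<and> b \<in> X \<or> a \<in> Y \<and> b \<in> Y" using assms(3) by blast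
  then show "a + b \<in> \<Union>C" using assms(2) qm_add \<open>X \<in> C\<close> \<open>Y \<in> C\<close> by blast
next
  fix s :: "'a mpoly"
  obtain X where "X \<in> C" using assms(1) by blast
  then show "s * s \<in> \<Union>C" using assms(2) qm_sq by blast
next
  fix s a assume "a \<in> \<Union>C"
  then obtain X where "X \<in> C" "a \<in> X" by blast
  then show "s * s * a \<in> \<Union>C" using assms(2) qm_sqmult by blast
qed

lemma weak_form:
  fixes Q :: "'n::finite mpoly set"
  assumes Q: "qm Q" and archQ: "\<forall>a. \<exists>B. mconst B - a \<in> Q"
    and pos: "\<And>x. (\<forall>q\<in>Q. meval q x \<ge> 0) \<Longrightarrow> meval f x > 0"
  shows "\<exists>t. is_sos t \<and> f * t - 1 \<in> Q"
proof (rule ccontr)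
  assume no: "\<not> (\<exists>t. is_sos t \<and> f * t - 1 \<in> Q)"
  define M0 where "M0 = {q - f * t | q t. q \<in> Q \<and> is_sos t}"
  define A where "A = {M. qm M \<and> M0 \<subseteq> M \<and> mconst (-1) \<notin> M}"
  have s1: "is_sos 1" using is_sos_sq[of 1] by simp
  have qmM0: "qm M0" unfolding qm_def
  proof (intro conjI ballI allI)
    fix a b assume "a \<in> M0" "b \<in> M0"
    then obtain q1 t1 q2 t2 where h: "a = q1 - f * t1" "q1 \<in> Q" "is_sos t1" "b = q2 - f * t2" "q2 \<in> Q" "is_sos t2"
      unfolding M0_def by blast
    have "a + b = (q1 + q2) - f * (t1 + t2)" unfolding h(1) h(4) by (simp add: algebra_simps)
    then show "a + b \<in> M0" unfolding M0_def using qm_add[OF Q h(2) h(5)] is_sos_add[OF h(3) h(6)] by blast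
  next
    fix s :: "'n mpoly"
    have "s * s = s * s - f * 0" by simp
    then show "s * s \<in> M0" unfolding M0_def using qm_sq[OF Q] is_sos_0 by blast
  next
    fix s a assume "a \<in> M0"
    then obtain q t where h: "a = q - f * t" "q \<in> Q" "is_sos t" unfolding M0_def by blast
    have "s * s * a = s * s * q - f * (s * s * t)" unfolding h(1) by (simp add: algebra_simps)
    then show "s * s * a \<in> M0" unfolding M0_def using qm_sqmult[OF Q h(2)] is_sos_sqmult[OF h(3)] by blast
  qed
  have propM0: "mconst (-1) \<notin> M0"
  proof
    assume "mconst (-1) \<in> M0"
    then obtain q t where h: "mconst (-1) = q - f * t" "q \<in> Q" "is_sos t" unfolding M0_def by blast
    have "q = f * t + mconst (-1)" unfolding h(1) by simp
    then have "f * t - 1 = q" by (simp add: mconst_m1)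
    then show False using no h by blast
  qed
  have "A \<noteq> {}" using qmM0 propM0 unfolding A_def by blast
  moreover have "\<Union>C \<in> A" if "C \<noteq> {}" "subset.chain A C" for C
  proof -
    have CA: "C \<subseteq> A" and ch: "\<forall>X\<in>C. \<forall>Y\<in>C. X \<subseteq> Y \<or> Y \<subseteq> X" using that(2) by (auto simp: subset_chain_def)
    have "qm (\<Union>C)" using CA ch that(1) by (intro qm_chain_union) (auto simp: A_def)
    moreover have "M0 \<subseteq> \<Union>C" using CA that(1) by (auto simp: A_def)
    moreover have "mconst (-1) \<notin> \<Union>C" using CA by (auto simp: A_def)
    ultimately show ?thesis by (simp add: A_def)
  qed
  ultimately obtain M where MA: "M \<in> A" and maxM: "\<forall>X\<in>A. M \<subseteq> X \<longrightarrow> X = M"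
    using subset_Zorn_nonempty[of A] by blast
  have qmM: "qm M" and M0M: "M0 \<subseteq> M" and propM: "mconst (-1) \<notin> M" using MA by (auto simp: A_def)
  have QM: "Q \<subseteq> M"
  proof
    fix q assume "q \<in> Q"
    then have "q - f * 0 \<in> M0" unfolding M0_def using is_sos_0 by blast
    then show "q \<in> M" using M0M by auto
  qed
  have fM: "- f \<in> M"
  proof -
    have "0 - f * 1 \<in> M0" unfolding M0_def using qm_zero[OF Q] s1 by blast
    then show ?thesis using M0M by auto
  qed
  have archM: "\<forall>a. \<exists>B. mconst B - a \<in> M" using archQ QM by blast
  have extM: "\<forall>b. b \<notin> M \<longrightarrow> (\<exists>m t. m \<in> M \<and> is_sos t \<and> mconst (-1) = m + b * t)"
  proof (intro allI impI)
    fix b assume bM: "b \<notin> M"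
    define M' where "M' = {m + b * t | m t. m \<in> M \<and> is_sos t}"
    have qmM': "qm M'" unfolding qm_def
    proof (intro conjI ballI allI)
      fix a c assume "a \<in> M'" "c \<in> M'"
      then obtain m1 t1 m2 t2 where h: "a = m1 + b * t1" "m1 \<in> M" "is_sos t1" "c = m2 + b * t2" "m2 \<in> M" "is_sos t2"
        unfolding M'_def by blast
      have "a + c = (m1 + m2) + b * (t1 + t2)" unfolding h(1) h(4) by (simp add: algebra_simps)
      then show "a + c \<in> M'" unfolding M'_def using qm_add[OF qmM h(2) h(5)] is_sos_add[OF h(3) h(6)] by blast
    next
      fix s :: "'n mpoly"
      have "s * s = s * s + b * 0" by simp
      then show "s * s \<in> M'" unfolding M'_def using qm_sq[OF qmM] is_sos_0 by blast
    next
      fix s a assume "a \<in> M'"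
      then obtain m t where h: "a = m + b * t" "m \<in> M" "is_sos t" unfolding M'_def by blast
      have "s * s * a = s * s * m + b * (s * s * t)" unfolding h(1) by (simp add: algebra_simps)
      then show "s * s * a \<in> M'" unfolding M'_def using qm_sqmult[OF qmM h(2)] is_sos_sqmult[OF h(3)] by blast
    qed
    have MM': "M \<subseteq> M'"
    proof
      fix m assume "m \<in> M"
      moreover have "m = m + b * 0" by simp
      ultimately show "m \<in> M'" unfolding M'_def using is_sos_0 by blast
    qed
    have bM': "b \<in> M'"
    proof -
      have "b = 0 + b * 1" by simp
      then show ?thesis unfolding M'_def using qm_zero[OF qmM] s1 by blast
    qed
    have "mconst (-1) \<in> M'"
    proof (rule ccontr)
      assume "mconst (-1) \<notin> M'"
      then have "M' \<in> A" using qmM' MM' M0M unfolding A_def by auto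
      then have "M' = M" using maxM MM' by blast
      then show False using bM bM' by simp
    qed
    then show "\<exists>m t. m \<in> M \<and> is_sos t \<and> mconst (-1) = m + b * t" unfolding M'_def by blast
  qed
  define x where "x = (\<chi> i. alph M (mvar i))"
  have ev: "alph M p = meval p x" for p
    unfolding x_def
    by (rule ring_hom_meval) (simp_all add: alph_add[OF qmM archM propM extM] alph_mult[OF qmM archM propM extM]
        alph_const[OF qmM archM propM extM])
  have "\<forall>q\<in>Q. meval q x \<ge> 0" using alph_nonneg[OF qmM archM propM extM] QM ev by force
  then have "meval f x > 0" by (rule pos)
  moreover have "alph M (- f) \<ge> 0" using alph_nonneg[OF qmM archM propM extM fM] .
  moreover have "alph M (- f) = - alph M f"
    using alph_add[OF qmM archM propM extM, of f "- f"] alph_const[OF qmM archM propM extM, of 0]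
    by (simp add: mconst_0)
  ultimately show False using ev by simp
qed

theorem putinar:
  fixes f :: "'n::finite mpoly"
  assumes arch: "archimedean m g" and pos: "\<forall>x\<in>semialg m g. meval f x > 0"
  shows "f \<in> qmodule m g"
proof -
  let ?Q = "qmodule m g"
  have Q: "qm ?Q" by (rule qm_qmodule)
  obtain N0 where N0: "N0 > 0" "mconst N0 - (\<Sum>i\<in>UNIV. mvar i * mvar i) \<in> ?Q"
    using arch unfolding archimedean_def by blast
  have b: "\<forall>a. \<exists>B. mconst B - a \<in> ?Q" using arch_bound[OF Q N0(2) N0(1)] by blast
  have "\<exists>t. is_sos t \<and> f * t - 1 \<in> ?Q"
  proof (rule weak_form[OF Q b])
    fix x assume "\<forall>q\<in>?Q. meval q x \<ge> 0"
    then have "x \<in> semialg m g" unfolding semialg_def using g_in_qmodule by blast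
    then show "meval f x > 0" using pos by blast
  qed
  then obtain t where "is_sos t" "f * t - 1 \<in> ?Q" by blast
  then show ?thesis using upgrade[OF Q b] by blast
qed



lemma linear_expand:
  fixes f :: "real ^ 'n::finite \<Rightarrow> real"
  assumes "linear f"
  shows "f x = (\<Sum>i\<in>UNIV. x $ i * f (axis i 1))"
proof -
  have "f x = f (\<Sum>i\<in>UNIV. x $ i *\<^sub>R axis i 1)"
    using basis_expansion[of x] by (simp add: scalar_mult_eq_scaleR)
  also have "\<dots> = (\<Sum>i\<in>UNIV. x $ i * f (axis i 1))"
    using assms by (simp add: linear_sum linear_scale o_def)
  finally show ?thesis .
qed

lemma rpf_to_mpoly:
  fixes w :: "real ^ 'n::finite \<Rightarrow> real"
  assumes "real_polynomial_function w"
  shows "\<exists>P. \<forall>x. meval P x = w x"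
  using assms
proof (induction w rule: real_polynomial_function.induct)
  case (linear f)
  let ?P = "\<Sum>i\<in>UNIV. mconst (f (axis i 1)) * mvar i :: 'n mpoly"
  have "meval ?P x = f x" for x
  proof -
    have "meval ?P x = (\<Sum>i\<in>UNIV. f (axis i 1) * x $ i)"
      by (simp add: meval_sum meval_mult meval_mconst meval_mvar)
    also have "\<dots> = (\<Sum>i\<in>UNIV. x $ i * f (axis i 1))" by (simp add: mult.commute)
    also have "\<dots> = f x" by (rule linear_expand[OF bounded_linear.linear[OF linear], symmetric])
    finally show ?thesis .
  qed
  then show ?case by blast
next
  case (const c)
  show ?case by (rule exI[of _ "mconst c"]) (simp add: meval_mconst)
next
  case (add f g)
  then obtain P1 P2 where "\<forall>x. meval P1 x = f x" "\<forall>x. meval P2 x = g x" by blast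
  then show ?case by (intro exI[of _ "P1 + P2"]) (simp add: meval_add)
next
  case (mult f g)
  then obtain P1 P2 where "\<forall>x. meval P1 x = f x" "\<forall>x. meval P2 x = g x" by blast
  then show ?case by (intro exI[of _ "P1 * P2"]) (simp add: meval_mult)
qed

lemma meval_continuous: "continuous_on S (\<lambda>x. meval (p :: 'n::finite mpoly) x)"
proof (induction p rule: mpoly_induct)
  case (const c) then show ?case by (simp add: meval_mconst)
next
  case (var i) then show ?case by (simp add: meval_mvar continuous_on_component)
next
  case (add p q) then show ?case by (simp add: meval_add continuous_on_add)
next
  case (mult p q) then show ?case by (simp add: meval_mult continuous_on_mult)
qed

definition feas :: "nat \<Rightarrow> nat \<Rightarrow> (nat \<Rightarrow> 'n::finite mpoly) \<Rightarrow> (nat \<Rightarrow> 'n mpoly) \<Rightarrow> (nat \<Rightarrow> 'n mpoly) \<Rightarrow> nat \<Rightarrow> real \<Rightarrow> bool" where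
  "feas N m p q g k c \<longleftrightarrow> (\<exists>h :: nat \<Rightarrow> 'n mpoly.
      (\<forall>i\<in>{2..N}. mdeg (h i) \<le> 2 * k - max (mdeg (q 1)) (mdeg (q i))) \<and>
      p 1 + ((\<Sum>i=2..N. h i) - mconst c) * q 1 \<in> qmodule_k m g k \<and>
      (\<forall>i\<in>{2..N}. p i - h i * q i \<in> qmodule_k m g k))"

lemma rho_k_feas: "rho_k N m p q g k = Sup {ereal c | c. feas N m p q g k c}"
  unfolding rho_k_def feas_def by simp

lemma feas_mono: assumes "feas N m p q g k c" shows "feas N m p q g (Suc k) c"
proof -
  obtain h where h: "\<forall>i\<in>{2..N}. mdeg (h i) \<le> 2 * k - max (mdeg (q 1)) (mdeg (q i))"
    "p 1 + ((\<Sum>i=2..N. h i) - mconst c) * q 1 \<in> qmodule_k m g k"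
    "\<forall>i\<in>{2..N}. p i - h i * q i \<in> qmodule_k m g k"
    using assms unfolding feas_def by blast
  have sub: "qmodule_k m g k \<subseteq> qmodule_k m g (Suc k)" by (rule qmodule_k_mono) simp
  have "\<forall>i\<in>{2..N}. mdeg (h i) \<le> 2 * Suc k - max (mdeg (q 1)) (mdeg (q i))"
  proof
    fix i assume "i \<in> {2..N}"
    then have "mdeg (h i) \<le> 2 * k - max (mdeg (q 1)) (mdeg (q i))" using h(1) by blast
    moreover have "2 * k - max (mdeg (q 1)) (mdeg (q i)) \<le> 2 * Suc k - max (mdeg (q 1)) (mdeg (q i))"
      by (rule diff_le_mono) simp
    ultimately show "mdeg (h i) \<le> 2 * Suc k - max (mdeg (q 1)) (mdeg (q i))" by (rule le_trans)
  qed
  then show ?thesis unfolding feas_def using h sub by blast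
qed

lemma feas_le:
  assumes N: "N \<ge> 1" and qpos: "\<forall>i\<in>{1..N}. \<forall>x\<in>semialg m g. meval (q i) x > 0"
    and f: "feas N m p q g k c" and x: "x \<in> semialg m g"
  shows "c \<le> (\<Sum>i=1..N. meval (p i) x / meval (q i) x)"
proof -
  obtain h where h: "p 1 + ((\<Sum>i=2..N. h i) - mconst c) * q 1 \<in> qmodule_k m g k"
    "\<forall>i\<in>{2..N}. p i - h i * q i \<in> qmodule_k m g k"
    using f unfolding feas_def by blast
  let ?S = "\<Sum>i=2..N. meval (h i) x"
  have q1: "meval (q 1) x > 0" using qpos x N by auto
  have "meval (p 1 + ((\<Sum>i=2..N. h i) - mconst c) * q 1) x \<ge> 0"
    by (rule meval_qmodule_k_nonneg[OF h(1) x])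
  then have "meval (p 1) x + (?S - c) * meval (q 1) x \<ge> 0"
    by (simp add: meval_add meval_mult meval_diff meval_sum meval_mconst)
  then have "(c - ?S) * meval (q 1) x \<le> meval (p 1) x" by (simp add: algebra_simps)
  then have 1: "c - ?S \<le> meval (p 1) x / meval (q 1) x" using q1 by (simp add: pos_le_divide_eq)
  have 2: "meval (h i) x \<le> meval (p i) x / meval (q i) x" if i: "i \<in> {2..N}" for i
  proof -
    have qi: "meval (q i) x > 0" using qpos x i by auto
    have "meval (p i - h i * q i) x \<ge> 0" using meval_qmodule_k_nonneg[OF _ x] h(2) i by blast
    then have "meval (h i) x * meval (q i) x \<le> meval (p i) x" by (simp add: meval_diff meval_mult)
    then show ?thesis using qi by (simp add: pos_le_divide_eq)
  qed
  have "?S \<le> (\<Sum>i=2..N. meval (p i) x / meval (q i) x)" by (rule sum_mono) (use 2 in auto)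
  moreover have "(\<Sum>i=1..N. meval (p i) x / meval (q i) x) = meval (p 1) x / meval (q 1) x + (\<Sum>i=2..N. meval (p i) x / meval (q i) x)"
    using N by (simp add: sum.atLeast_Suc_atMost numeral_2_eq_2)
  ultimately show ?thesis using 1 by linarith
qed

lemma rho_k_le_rho:
  assumes N: "N \<ge> 1" and qpos: "\<forall>i\<in>{1..N}. \<forall>x\<in>semialg m g. meval (q i) x > 0"
  shows "rho_k N m p q g k \<le> rho N m p q g"
  unfolding rho_k_feas rho_def
proof (rule Sup_least)
  fix y assume "y \<in> {ereal c | c. feas N m p q g k c}"
  then obtain c where y: "y = ereal c" "feas N m p q g k c" by blast
  show "y \<le> (INF x\<in>semialg m g. ereal (\<Sum>i=1..N. meval (p i) x / meval (q i) x))"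
    unfolding y(1)
  proof (rule INF_greatest)
    fix x assume "x \<in> semialg m g"
    then show "ereal c \<le> ereal (\<Sum>i=1..N. meval (p i) x / meval (q i) x)"
      using feas_le[OF N qpos y(2)] by simp
  qed
qed

lemma rho_k_mono: "rho_k N m p q g k \<le> rho_k N m p q g (Suc k)"
  unfolding rho_k_feas by (rule Sup_subset_mono) (auto intro: feas_mono)

lemma feas_eventually:
  assumes N: "N \<ge> 1" and K: "compact (semialg m g)"
    and qpos: "\<forall>i\<in>{1..N}. \<forall>x\<in>semialg m g. meval (q i) x > 0"
    and arch: "archimedean m g" and c: "ereal c < rho N m p q g"
  shows "eventually (\<lambda>k. feas N m p q g k c) sequentially"
proof -
  let ?K = "semialg m g"
  let ?F = "\<lambda>x. \<Sum>i=1..N. meval (p i) x / meval (q i) x"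
  obtain c' where c': "ereal c < ereal c'" "ereal c' < rho N m p q g" using ereal_dense2[OF c] by blast
  define \<epsilon> where "\<epsilon> = c' - c"
  have e0: "\<epsilon> > 0" using c' by (simp add: \<epsilon>_def)
  define e where "e = \<epsilon> / (2 * N)"
  have ee: "e > 0" using e0 N by (simp add: e_def)
  have Fx: "?F x > c'" if "x \<in> ?K" for x
  proof -
    have "rho N m p q g \<le> ereal (?F x)" unfolding rho_def by (rule INF_lower) (use that in auto)
    with c'(2) have "ereal c' < ereal (?F x)" by (rule less_le_trans)
    then show ?thesis by simp
  qed
  have "\<forall>i. \<exists>P. i \<in> {2..N} \<longrightarrow> (\<forall>x\<in>?K. \<bar>meval (p i) x / meval (q i) x - meval P x\<bar> < e)"
  proof
    fix i
    show "\<exists>P. i \<in> {2..N} \<longrightarrow> (\<forall>x\<in>?K. \<bar>meval (p i) x / meval (q i) x - meval P x\<bar> < e)"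
    proof (cases "i \<in> {2..N}")
      case True
      have nz: "\<forall>x\<in>?K. meval (q i) x \<noteq> 0"
      proof
        fix x assume "x \<in> ?K"
        then have "meval (q i) x > 0" using qpos True by auto
        then show "meval (q i) x \<noteq> 0" by simp
      qed
      have "continuous_on ?K (\<lambda>x. meval (p i) x / meval (q i) x)"
        using nz by (intro continuous_on_divide meval_continuous) auto
      then obtain w where w: "real_polynomial_function w" "\<And>x. x \<in> ?K \<Longrightarrow> \<bar>meval (p i) x / meval (q i) x - w x\<bar> < e"
        using Stone_Weierstrass_real_polynomial_function[OF K _ ee] by blast
      obtain P where Pw: "\<forall>x. meval P x = w x" using rpf_to_mpoly[OF w(1)] by blast
      have "\<forall>x\<in>?K. \<bar>meval (p i) x / meval (q i) x - meval P x\<bar> < e" using w(2) Pw by simp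
      then show ?thesis by blast
    qed auto
  qed
  then have "\<exists>P. \<forall>i. i \<in> {2..N} \<longrightarrow> (\<forall>x\<in>?K. \<bar>meval (p i) x / meval (q i) x - meval (P i) x\<bar> < e)"
    by (rule choice)
  then obtain P where P0: "\<forall>i. i \<in> {2..N} \<longrightarrow> (\<forall>x\<in>?K. \<bar>meval (p i) x / meval (q i) x - meval (P i) x\<bar> < e)"
    by blast
  have P: "\<bar>meval (p i) x / meval (q i) x - meval (P i) x\<bar> < e" if "i \<in> {2..N}" "x \<in> ?K" for i x
    using P0 that by blast
  define h where "h i = P i - mconst e" for i
  have hval: "meval (h i) x = meval (P i) x - e" for i x by (simp add: h_def meval_diff meval_mconst)
  have pos_i: "meval (p i - h i * q i) x > 0" if i: "i \<in> {2..N}" and x: "x \<in> ?K" for i x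
  proof -
    have qi: "meval (q i) x > 0" using qpos i x by auto
    have "meval (h i) x < meval (p i) x / meval (q i) x" using P[OF i x] hval[of i x] by linarith
    then have "meval (h i) x * meval (q i) x < meval (p i) x" using qi by (simp add: pos_less_divide_eq)
    then show ?thesis by (simp add: meval_diff meval_mult)
  qed
  have pos_1: "meval (p 1 + ((\<Sum>i=2..N. h i) - mconst c) * q 1) x > 0" if x: "x \<in> ?K" for x
  proof -
    have q1: "meval (q 1) x > 0" using qpos x N by auto
    let ?S = "\<Sum>i=2..N. meval (h i) x"
    have hb: "meval (p i) x / meval (q i) x - 2 * e \<le> meval (h i) x" if i: "i \<in> {2..N}" for i
      using P[OF i x] hval[of i x] by linarith
    have "(\<Sum>i=2..N. meval (p i) x / meval (q i) x - 2 * e) \<le> ?S" by (rule sum_mono) (use hb in auto)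
    moreover have "(\<Sum>i=2..N. meval (p i) x / meval (q i) x - 2 * e) = (\<Sum>i=2..N. meval (p i) x / meval (q i) x) - real (N - 1) * (2 * e)"
      by (simp add: sum_subtractf)
    moreover have "real (N - 1) * (2 * e) \<le> \<epsilon>"
    proof -
      have "real (N - 1) * (2 * e) \<le> real N * (2 * e)" using ee by (intro mult_right_mono) auto
      also have "\<dots> = \<epsilon>" using N by (simp add: e_def)
      finally show ?thesis .
    qed
    moreover have "?F x = meval (p 1) x / meval (q 1) x + (\<Sum>i=2..N. meval (p i) x / meval (q i) x)"
      using N by (simp add: sum.atLeast_Suc_atMost numeral_2_eq_2)
    moreover have "\<epsilon> = c' - c" by (simp add: \<epsilon>_def)
    ultimately have "meval (p 1) x / meval (q 1) x + ?S - c > 0" using Fx[OF x] by linarith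
    then have "0 < (meval (p 1) x / meval (q 1) x + ?S - c) * meval (q 1) x" using q1 by simp
    also have "\<dots> = meval (p 1) x + (?S - c) * meval (q 1) x" using q1 by (simp add: field_simps)
    also have "\<dots> = meval (p 1 + ((\<Sum>i=2..N. h i) - mconst c) * q 1) x"
      by (simp add: meval_add meval_mult meval_diff meval_sum meval_mconst)
    finally show ?thesis .
  qed
  have E1: "eventually (\<lambda>k. \<forall>i\<in>{2..N}. mdeg (h i) \<le> 2 * k - max (mdeg (q 1)) (mdeg (q i))) sequentially"
  proof (rule eventually_ball_finite, simp, intro ballI)
    fix i
    show "eventually (\<lambda>k. mdeg (h i) \<le> 2 * k - max (mdeg (q 1)) (mdeg (q i))) sequentially"
      unfolding eventually_sequentially
    proof (rule exI[of _ "mdeg (h i) + max (mdeg (q 1)) (mdeg (q i))"], intro allI impI)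
      fix k assume "mdeg (h i) + max (mdeg (q 1)) (mdeg (q i)) \<le> k"
      then show "mdeg (h i) \<le> 2 * k - max (mdeg (q 1)) (mdeg (q i))" by linarith
    qed
  qed
  have E2: "eventually (\<lambda>k. p 1 + ((\<Sum>i=2..N. h i) - mconst c) * q 1 \<in> qmodule_k m g k) sequentially"
    by (rule qmodule_eventually, rule putinar[OF arch]) (use pos_1 in auto)
  have E3: "eventually (\<lambda>k. \<forall>i\<in>{2..N}. p i - h i * q i \<in> qmodule_k m g k) sequentially"
  proof (rule eventually_ball_finite, simp, intro ballI)
    fix i assume "i \<in> {2..N}"
    then show "eventually (\<lambda>k. p i - h i * q i \<in> qmodule_k m g k) sequentially"
      by (intro qmodule_eventually putinar[OF arch]) (use pos_i in auto)
  qed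
  show ?thesis
    using eventually_conj[OF E1 eventually_conj[OF E2 E3]]
  proof eventually_elim
    case (elim k)
    then show ?case unfolding feas_def by (intro exI[of _ h]) blast
  qed
qed

theorem theorem3p3:
  fixes N m :: nat
    and p q g :: "nat \<Rightarrow> ('n::finite) mpoly"
  assumes "N \<ge> 1" and "m \<ge> 1"
    and "compact (semialg m g)"
    and "\<forall>i\<in>{1..N}. \<forall>x\<in>semialg m g. meval (q i) x > 0"
    and "archimedean m g"
  shows "(\<forall>k\<ge>d_min N m p q g. rho_k N m p q g k \<le> rho_k N m p q g (Suc k) \<and>
            rho_k N m p q g (Suc k) \<le> rho N m p q g)
         \<and> (rho_k N m p q g \<longlonglongrightarrow> rho N m p q g)"
proof (intro conjI allI impI)
  fix k
  show "rho_k N m p q g k \<le> rho_k N m p q g (Suc k)" by (rule rho_k_mono)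
  show "rho_k N m p q g (Suc k) \<le> rho N m p q g" by (rule rho_k_le_rho[OF assms(1) assms(4)])
next
  show "rho_k N m p q g \<longlonglongrightarrow> rho N m p q g"
  proof (rule order_tendstoI)
    fix a assume "a < rho N m p q g"
    then obtain c where c: "a < ereal c" "ereal c < rho N m p q g" using ereal_dense2 by blast
    have "eventually (\<lambda>k. feas N m p q g k c) sequentially"
      by (rule feas_eventually[OF assms(1) assms(3) assms(4) assms(5) c(2)])
    then show "eventually (\<lambda>k. a < rho_k N m p q g k) sequentially"
    proof eventually_elim
      case (elim k)
      then have "ereal c \<le> rho_k N m p q g k" unfolding rho_k_feas by (intro Sup_upper) blast
      then show ?case using c(1) by simp
    qed
  next
    fix a assume "rho N m p q g < a"
    show "eventually (\<lambda>k. rho_k N m p q g k < a) sequentially"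
    proof (rule always_eventually, rule allI)
      fix k
      show "rho_k N m p q g k < a"
        using rho_k_le_rho[OF assms(1) assms(4)] \<open>rho N m p q g < a\<close> by (rule le_less_trans)
    qed
  qed
qed


end
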